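(* Let $\mathcal T\in\Sigma^n$ be a text. Then $|\mathtt{st\text{-}pos}^-|$ is at most the number of escape symbols $\bot$ output by the following simple version of PPM$^*$ on $\mathcal T$: encode $\mathcal T[1]$ as $\bot\mathcal T[1]$; for $j=2,\dots,n$, let $i'$ be the minimum $i'\le j$ such that $\mathcal T[i',j-1]$ occurs in $\mathcal T[1,j-2]$; if $\mathcal T[i',j]$ occurs in $\mathcal T[1,j-1]$, encode $\mathcal T[j]$ according to the distribution of characters immediately following occurrences of $\mathcal T[i',j-1]$, otherwise encode $\mathcal T[j]$ as $\bot\mathcal T[j]$.
   Context: A text is a string $\mathcal T\in\Sigma^n$ over an integer alphabet whose last symbol $\mathcal T[n]=\$$ occurs only there and is smallest. For $i\ne j$, $\mathrm{rlce}(i,j)$ is the length of the longest common prefix of $\mathcal T[i,n]$ and $\mathcal T[j,n]$. $\mathrm{LPF}[i]=0$ if $i=1$, else $\mathrm{LPF}[i]=\max_{j<i}\mathrm{rlce}(j,i)$. $\mathtt{st\text{-}pos}^-$ is the set $\{i+\mathrm{LPF}[i]: i\in[n]\}$ (without duplicates), and $|\mathtt{st\text{-}pos}^-|$ its cardinality. The empty string $\mathcal T[j,j-1]$ is considered to occur in any string. *)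

theory Defs
  imports Main "HOL-Library.Sublist"
begin

text \<open>Texts are lists; positions are 1-based as in the paper: T[i] = T ! (i-1).\<close>

definition is_text :: "int list \<Rightarrow> bool" where
  "is_text T \<longleftrightarrow> T \<noteq> [] \<and>
     (\<forall>k < length T - 1. T ! k \<noteq> last T \<and> last T < T ! k)"

text \<open>Substring T[i,j] (1-based, inclusive); the empty string when j = i - 1.\<close>
definition substr :: "'a list \<Rightarrow> nat \<Rightarrow> nat \<Rightarrow> 'a list" where
  "substr T i j = take (Suc j - i) (drop (i - 1) T)"

fun lcp_len :: "'a list \<Rightarrow> 'a list \<Rightarrow> nat" where
  "lcp_len (x # xs) (y # ys) = (if x = y then Suc (lcp_len xs ys) else 0)"
| "lcp_len _ _ = 0"

definition rlce :: "'a list \<Rightarrow> nat \<Rightarrow> nat \<Rightarrow> nat" where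
  "rlce T i j = lcp_len (drop (i - 1) T) (drop (j - 1) T)"

definition LPF :: "'a list \<Rightarrow> nat \<Rightarrow> nat" where
  "LPF T i = (if i = 1 then 0 else Max {rlce T j i | j. 1 \<le> j \<and> j < i})"

definition st_pos_minus :: "'a list \<Rightarrow> nat set" where
  "st_pos_minus T = {i + LPF T i | i. 1 \<le> i \<and> i \<le> length T}"

text \<open>T[1] is always encoded with an escape.\<close>
definition ppm_ctx_start :: "'a list \<Rightarrow> nat \<Rightarrow> nat" where
  "ppm_ctx_start T j = (LEAST i'. 1 \<le> i' \<and> i' \<le> j \<and>
      sublist (substr T i' (j - 1)) (substr T 1 (j - 2)))"

definition ppm_escape :: "'a list \<Rightarrow> nat \<Rightarrow> bool" where
  "ppm_escape T j \<longleftrightarrow>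
     \<not> sublist (substr T (ppm_ctx_start T j) j) (substr T 1 (j - 1))"

definition ppm_escapes :: "'a list \<Rightarrow> nat" where
  "ppm_escapes T = 1 + card {j. 2 \<le> j \<and> j \<le> length T \<and> ppm_escape T j}"

end

theory Submission
  imports Defs
begin

lemma lcp_ge: "take m xs = take m ys \<Longrightarrow> m \<le> length xs \<Longrightarrow> m \<le> length ys \<Longrightarrow> m \<le> lcp_len xs ys"
proof (induction xs arbitrary: ys m)
  case Nil then show ?case by simp
next
  case (Cons x xs) then show ?case by (cases ys; cases m) auto
qed

lemma lcp_take: "take (lcp_len xs ys) xs = take (lcp_len xs ys) ys"
  by (induction xs ys rule: lcp_len.induct) auto

lemma lcp_le: "lcp_len xs ys \<le> length ys"
  by (induction xs ys rule: lcp_len.induct) auto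

lemma sub_take_drop: "a + L \<le> m \<Longrightarrow> sublist (take L (drop a T)) (take m T)"
proof -
  assume h: "a + L \<le> m"
  have "take L (drop a T) = take L (drop a (take m T))" using h
    by (simp add: take_drop min_def)
  moreover have "sublist (take L (drop a (take m T))) (take m T)"
    by (meson sublist_order.order.trans prefix_imp_sublist suffix_imp_sublist take_is_prefix suffix_drop)
  ultimately show ?thesis by simp
qed

lemma sublist_pos: "sublist xs ys \<Longrightarrow> \<exists>p. p + length xs \<le> length ys \<and> xs = take (length xs) (drop p ys)"
proof -
  assume "sublist xs ys"
  then obtain ps ss where "ys = ps @ xs @ ss" unfolding sublist_def by blast
  then show ?thesis by (intro exI[of _ "length ps"]) simp
qed

lemma key:
  fixes T :: "int list"
  assumes tx: "is_text T" and i2: "2 \<le> i" and iN: "i \<le> length T"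
  shows "2 \<le> i + LPF T i \<and> i + LPF T i \<le> length T \<and> ppm_escape T (i + LPF T i)"
proof -
  define n where "n = length T"
  define S where "S = {rlce T j i | j. 1 \<le> j \<and> j < i}"
  have Seq: "S = (\<lambda>j. rlce T j i) ` {1..<i}" unfolding S_def by auto
  have fin: "finite S" and ne: "S \<noteq> {}" using i2 unfolding Seq by auto
  have LPF: "LPF T i = Max S" using i2 unfolding LPF_def S_def by simp
  define L where "L = LPF T i"
  obtain j0 where j0: "1 \<le> j0" "j0 < i" "L = rlce T j0 i"
    using Max_in[OF fin ne] LPF unfolding L_def S_def by auto
  have maxp: "rlce T p i \<le> L" if "1 \<le> p" "p < i" for p
  proof -
    have "rlce T p i \<in> S" using that unfolding S_def by blast
    then show ?thesis using Max_ge[OF fin] LPF unfolding L_def by simp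
  qed
  have tk: "take L (drop (j0-1) T) = take L (drop (i-1) T)"
    using j0(3) lcp_take unfolding rlce_def by metis
  have Lle: "L \<le> n - i + 1" using j0(3) lcp_le[of "drop (j0-1) T" "drop (i-1) T"] i2 iN
    unfolding rlce_def n_def by simp
  have Llt: "L \<le> n - i"
  proof (rule ccontr)
    assume "\<not> L \<le> n - i"
    hence L: "L = n - i + 1" using Lle by simp
    have "take L (drop (j0-1) T) ! (n - i) = take L (drop (i-1) T) ! (n - i)" using tk by simp
    hence "T ! (j0 - 1 + (n - i)) = T ! (n - 1)" using L i2 iN j0 unfolding n_def by simp
    moreover have "T ! (n - 1) = last T" using tx unfolding is_text_def n_def by (simp add: last_conv_nth)
    moreover have "j0 - 1 + (n - i) < length T - 1" using j0 i2 iN unfolding n_def by simp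
    ultimately show False using tx unfolding is_text_def by metis
  qed
  define j where "j = i + L"
  have jn: "j \<le> n" "2 \<le> j" using Llt iN i2 unfolding j_def n_def by auto
  have occ: "sublist (substr T i (j - 1)) (substr T 1 (j - 2))"
  proof -
    have "substr T i (j - 1) = take L (drop (j0-1) T)" using tk i2 unfolding substr_def j_def by simp
    moreover have "substr T 1 (j - 2) = take (j - 2) T" using jn unfolding substr_def by simp
    moreover have "j0 - 1 + L \<le> j - 2" using j0 i2 unfolding j_def by simp
    ultimately show ?thesis using sub_take_drop by metis
  qed
  define i' where "i' = ppm_ctx_start T j"
  have P: "1 \<le> i' \<and> i' \<le> j \<and> sublist (substr T i' (j - 1)) (substr T 1 (j - 2))"
    unfolding i'_def ppm_ctx_start_def
    by (rule LeastI[of _ i]) (use occ i2 in \<open>auto simp: j_def\<close>)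
  have i'i: "i' \<le> i" unfolding i'_def ppm_ctx_start_def
    by (rule Least_le) (use occ i2 in \<open>auto simp: j_def\<close>)
  have esc: "ppm_escape T j"
    unfolding ppm_escape_def i'_def[symmetric]
  proof
    assume s: "sublist (substr T i' j) (substr T 1 (j - 1))"
    have "substr T i j = drop (i - i') (substr T i' j)"
      using P i'i i2 jn unfolding substr_def j_def by (simp add: drop_take)
    hence "suffix (substr T i j) (substr T i' j)" by (simp add: suffix_drop)
    hence s2: "sublist (substr T i j) (take (j - 1) T)"
      using s jn unfolding substr_def
      by (metis suffix_imp_sublist sublist_order.order.trans diff_Suc_1 take_drop drop_0 diff_Suc_Suc
          Suc_pred' cancel_comm_monoid_add_class.diff_cancel le_add_diff_inverse2 le_numeral_extra(4)
          less_le_trans numeral_2_eq_2 zero_less_Suc)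
    have len: "length (substr T i j) = L + 1" using jn i2 iN unfolding substr_def j_def n_def by simp
    obtain p where p: "p + (L+1) \<le> j - 1" "substr T i j = take (L+1) (drop p (take (j-1) T))"
      using sublist_pos[OF s2] len jn unfolding n_def by auto
    have pe: "substr T i j = take (L+1) (drop p T)" using p(1) p(2) by (simp add: take_drop min_def)
    have "substr T i j = take (L+1) (drop (i-1) T)" unfolding substr_def j_def using i2 by simp
    hence "L + 1 \<le> rlce T (p+1) i" unfolding rlce_def
      using pe len jn p(1) i2 unfolding j_def n_def
      by (intro lcp_ge) (auto)
    moreover have "rlce T (p+1) i \<le> L" using maxp p(1) unfolding j_def by simp
    ultimately show False by simp
  qed
  show ?thesis using jn esc unfolding j_def L_def n_def by simp
qed

theorem lemma48:
  fixes T :: "int list"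
  assumes "is_text T"
  shows "card (st_pos_minus T) \<le> ppm_escapes T"
proof -
  define E where "E = {j. 2 \<le> j \<and> j \<le> length T \<and> ppm_escape T j}"
  have sub: "st_pos_minus T \<subseteq> insert 1 E"
  proof
    fix x assume "x \<in> st_pos_minus T"
    then obtain i where i: "x = i + LPF T i" "1 \<le> i" "i \<le> length T" unfolding st_pos_minus_def by auto
    show "x \<in> insert 1 E"
    proof (cases "i = 1")
      case True then show ?thesis using i by (simp add: LPF_def)
    next
      case False then show ?thesis using key[OF assms, of i] i unfolding E_def by auto
    qed
  qed
  have fE: "finite E" unfolding E_def by auto
  have "card (st_pos_minus T) \<le> card (insert 1 E)" using sub fE by (intro card_mono) auto
  also have "\<dots> \<le> 1 + card E" using fE by (simp add: card_insert_if)
  finally show ?thesis unfolding ppm_escapes_def E_def by simp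
qed

end
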